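(* Let $G$ be the free group on the generators $\vec{s}=(s_n)_{n\in\omega}$ and $S\subseteq G$ the free semigroup on the same generators. Let $p$ be a very strongly productive ultrafilter on $S$ (regarded as an ultrafilter on $G$). If $q,r\in\beta G$ satisfy $qr=p$, then there is $w\in G$ such that one of the following holds: (1) $r=wp$ and $q=pw^{-1}$; (2) $r=w$ and $q=pw^{-1}$; (3) $r=wp$ and $q=w^{-1}$. In particular, if $q,r\in G^*$ and $qr=p$, then $r=wp$ and $q=pw^{-1}$ for some $w\in G$.
   Context: $\beta G$ is the set of ultrafilters on $G$, with elements of $G$ identified with principal ultrafilters and $G^*=\beta G\setminus G$ the nonprincipal ones. The product in $\beta G$ is defined by $A\in qr$ iff $\{x\in G: x^{-1}A\in r\}\in q$, where $x^{-1}A=\{y: xy\in A\}$; thus e.g. $wp=\{A: w^{-1}A\in p\}$ and $pw^{-1}=\{A: Aw\in p\}$. For a sequence $\vec{x}$ in $S$, $\mathrm{FP}(\vec{x})$ is the set of products $\prod_{i\in a}x_i$ (increasing order of indices), $a$ a finite nonempty subset of $\omega$. A sequence $\vec{y}$ is a product subsystem of $\vec{x}$ if there are finite nonempty $a_n\subseteq\omega$ with $\max a_n<\min a_{n+1}$ and $y_n=\prod_{i\in a_n}x_i$. An ultrafilter $p$ on $S$ is very strongly productive if every $A\in p$ contains some $\mathrm{FP}(\vec{x})\in p$ with $\vec{x}$ a product subsystem of $\vec{s}$. *)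

theory Defs
  imports Main
begin

text \<open>A letter (n, True) stands for the generator s_n, (n, False) for its inverse.\<close>
type_synonym letter = "nat \<times> bool"

fun freduced :: "letter list \<Rightarrow> bool" where
  "freduced [] = True"
| "freduced [x] = True"
| "freduced (x # y # zs) = (\<not> (fst x = fst y \<and> snd x \<noteq> snd y) \<and> freduced (y # zs))"

definition cancel_step :: "letter \<Rightarrow> letter list \<Rightarrow> letter list" where
  "cancel_step x ys = (case ys of [] \<Rightarrow> [x]
     | y # ys' \<Rightarrow> (if fst y = fst x \<and> snd y \<noteq> snd x then ys' else x # ys))"

definition freduce :: "letter list \<Rightarrow> letter list" where
  "freduce xs = foldr cancel_step xs []"

typedef fg = "{xs :: letter list. freduced xs}"
  by (rule exI[of _ "[]"]) simp

definition gone :: fg where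
  "gone = Abs_fg []"

definition gmul :: "fg \<Rightarrow> fg \<Rightarrow> fg" where
  "gmul x y = Abs_fg (freduce (Rep_fg x @ Rep_fg y))"

definition ginv :: "fg \<Rightarrow> fg" where
  "ginv x = Abs_fg (rev (map (\<lambda>(n, b). (n, \<not> b)) (Rep_fg x)))"

definition gen :: "nat \<Rightarrow> fg" where
  "gen n = Abs_fg [(n, True)]"

definition freeS :: "fg set" where
  "freeS = {x. Rep_fg x \<noteq> [] \<and> (\<forall>l \<in> set (Rep_fg x). snd l)}"

definition gprod :: "fg list \<Rightarrow> fg" where
  "gprod xs = foldr gmul xs gone"

definition is_ultrafilter :: "'a set set \<Rightarrow> bool" where
  "is_ultrafilter U \<longleftrightarrow> UNIV \<in> U \<and> {} \<notin> U
     \<and> (\<forall>A B. A \<in> U \<and> B \<in> U \<longrightarrow> A \<inter> B \<in> U)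
     \<and> (\<forall>A B. A \<in> U \<and> A \<subseteq> B \<longrightarrow> B \<in> U)
     \<and> (\<forall>A. A \<in> U \<or> - A \<in> U)"

definition principal :: "'a \<Rightarrow> 'a set set" where
  "principal x = {A. x \<in> A}"

definition umult :: "fg set set \<Rightarrow> fg set set \<Rightarrow> fg set set" where
  "umult q r = {A. {x. {y. gmul x y \<in> A} \<in> r} \<in> q}"

definition FP :: "(nat \<Rightarrow> fg) \<Rightarrow> fg set" where
  "FP x = {gprod (map x (sorted_list_of_set a)) | a. finite a \<and> a \<noteq> {}}"

definition product_subsystem :: "(nat \<Rightarrow> fg) \<Rightarrow> (nat \<Rightarrow> fg) \<Rightarrow> bool" where
  "product_subsystem y x \<longleftrightarrow> (\<exists>a :: nat \<Rightarrow> nat set.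
      (\<forall>n. finite (a n) \<and> a n \<noteq> {})
    \<and> (\<forall>n. Max (a n) < Min (a (Suc n)))
    \<and> (\<forall>n. y n = gprod (map x (sorted_list_of_set (a n)))))"

definition very_strongly_productive :: "fg set set \<Rightarrow> bool" where
  "very_strongly_productive p \<longleftrightarrow>
     (\<forall>A \<in> p. \<exists>y. product_subsystem y gen \<and> FP y \<subseteq> A \<and> FP y \<in> p)"

end

theory Submission
  imports Defs
begin

definition flipl :: "letter \<Rightarrow> letter" where "flipl l = (fst l, \<not> snd l)"
definition canc :: "letter \<Rightarrow> letter \<Rightarrow> bool" where
  "canc x y \<longleftrightarrow> fst x = fst y \<and> snd x \<noteq> snd y"

lemma freduced_Cons: "freduced (x # ys) \<longleftrightarrow> freduced ys \<and> (ys = [] \<or> \<not> canc x (hd ys))"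
  by (cases ys) (auto simp: canc_def)

lemma cancel_step_red: "freduced ys \<Longrightarrow> freduced (cancel_step x ys)"
  by (cases ys) (auto simp: cancel_step_def freduced_Cons canc_def)

lemma freduce_red: "freduced (freduce xs)"
  unfolding freduce_def by (induction xs) (auto intro: cancel_step_red)

lemma cancel_step_id: "freduced (x # ys) \<Longrightarrow> cancel_step x ys = x # ys"
  by (cases ys) (auto simp: cancel_step_def)

lemma freduce_id: "freduced xs \<Longrightarrow> freduce xs = xs"
  unfolding freduce_def
proof (induction xs)
  case (Cons x xs)
  have "freduced xs" using Cons.prems by (simp add: freduced_Cons)
  then show ?case using Cons by (simp add: cancel_step_id)
qed simp

lemma freduce_append: "freduce (xs @ ys) = foldr cancel_step xs (freduce ys)"
  unfolding freduce_def by simp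

lemma cs_cs_inv: assumes r: "freduced M" and c: "canc x y" shows "cancel_step x (cancel_step y M) = M"
proof (cases M)
  case (Cons m M')
  show ?thesis
  proof (cases "canc y m")
    case True
    then have "cancel_step y M = M'" using Cons by (auto simp: cancel_step_def canc_def)
    moreover have "m = x" using True c by (cases m; cases x; cases y) (auto simp: canc_def)
    moreover have "M' = [] \<or> \<not> canc m (hd M')" using r Cons by (simp add: freduced_Cons)
    ultimately show ?thesis using Cons
      by (cases M') (auto simp: cancel_step_def canc_def)
  next
    case False
    then have "cancel_step y M = y # M" using Cons by (auto simp: cancel_step_def canc_def)
    then show ?thesis using c by (auto simp: cancel_step_def canc_def)
  qed
qed (use c in \<open>auto simp: cancel_step_def canc_def\<close>)

lemma foldr_cs_red: "freduced zs \<Longrightarrow> freduced (foldr cancel_step L zs)"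
  by (induction L) (auto intro: cancel_step_red)

lemma foldr_cs_step:
  assumes "freduced L" "freduced zs"
  shows "foldr cancel_step (cancel_step x L) zs = cancel_step x (foldr cancel_step L zs)"
proof (cases L)
  case Nil then show ?thesis by (simp add: cancel_step_def)
next
  case (Cons y L')
  show ?thesis
  proof (cases "fst y = fst x \<and> snd y \<noteq> snd x")
    case True
    then have "cancel_step x L = L'" using Cons by (simp add: cancel_step_def)
    moreover have "canc x y" using True by (auto simp: canc_def)
    moreover have "freduced (foldr cancel_step L' zs)" using assms by (intro foldr_cs_red)
    ultimately show ?thesis using Cons by (simp add: cs_cs_inv)
  next
    case False
    then have "cancel_step x L = x # L" using Cons by (simp add: cancel_step_def)
    then show ?thesis by simp
  qed
qed

lemma foldr_freduce: "freduced zs \<Longrightarrow> foldr cancel_step (freduce A) zs = foldr cancel_step A zs"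
proof (induction A)
  case Nil then show ?case by (simp add: freduce_def)
next
  case (Cons a A)
  have "freduce (a # A) = cancel_step a (freduce A)" by (simp add: freduce_def)
  then show ?case using Cons foldr_cs_step[OF freduce_red Cons.prems] by simp
qed

lemma freduce_freduce_append: "freduce (freduce A @ B) = freduce (A @ B)"
  by (simp add: freduce_append foldr_freduce freduce_red)

lemma freduce_append_freduce: "freduce (A @ freduce B) = freduce (A @ B)"
  by (simp add: freduce_append freduce_id freduce_red)

lemma Rep_Abs_red: "freduced xs \<Longrightarrow> Rep_fg (Abs_fg xs) = xs"
  by (simp add: Abs_fg_inverse)

lemma Rep_red: "freduced (Rep_fg x)"
  using Rep_fg by simp

lemma Rep_gmul: "Rep_fg (gmul x y) = freduce (Rep_fg x @ Rep_fg y)"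
  by (simp add: gmul_def Rep_Abs_red freduce_red)

lemma gmul_assoc: "gmul (gmul x y) z = gmul x (gmul y z)"
proof -
  have "Rep_fg (gmul (gmul x y) z) = Rep_fg (gmul x (gmul y z))"
    by (simp add: Rep_gmul freduce_freduce_append freduce_append_freduce)
  then show ?thesis by (simp add: Rep_fg_inject)
qed

lemma Rep_gone: "Rep_fg gone = []"
  by (simp add: gone_def Rep_Abs_red)

lemma gmul_gone_left[simp]: "gmul gone x = x"
  by (simp add: gmul_def Rep_gone freduce_id Rep_red Rep_fg_inverse)

lemma gmul_gone_right[simp]: "gmul x gone = x"
  by (simp add: gmul_def Rep_gone freduce_id Rep_red Rep_fg_inverse)

definition invw :: "letter list \<Rightarrow> letter list" where
  "invw xs = rev (map (\<lambda>(n, b). (n, \<not> b)) xs)"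

lemma invw_Cons: "invw (x # xs) = invw xs @ [(fst x, \<not> snd x)]"
  by (cases x) (simp add: invw_def)

lemma invw_invw[simp]: "invw (invw xs) = xs"
  by (induction xs) (auto simp: invw_def rev_map comp_def)

lemma freduced_append_single:
  "freduced (xs @ [y]) \<longleftrightarrow> freduced xs \<and> (xs = [] \<or> \<not> canc (last xs) y)"
proof (induction xs rule: freduced.induct)
  case 1 then show ?case by simp
next
  case (2 x) then show ?case by (simp add: canc_def)
next
  case (3 x z zs) then show ?case by (cases zs) (auto simp: freduced_Cons)
qed

lemma freduced_invw: "freduced xs \<Longrightarrow> freduced (invw xs)"
proof (induction xs)
  case (Cons x xs)
  have r: "freduced xs" using Cons.prems by (simp add: freduced_Cons)
  have nc: "xs = [] \<or> \<not> canc x (hd xs)" using Cons.prems by (simp add: freduced_Cons)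
  show ?case
  proof (cases "xs = []")
    case True then show ?thesis by (simp add: invw_def)
  next
    case False
    then have l: "last (invw xs) = (fst (hd xs), \<not> snd (hd xs))"
      by (cases xs) (auto simp: invw_def)
    have "\<not> canc (last (invw xs)) (fst x, \<not> snd x)"
      using nc False unfolding l canc_def by auto
    moreover have "invw xs \<noteq> []" using False by (simp add: invw_def)
    ultimately show ?thesis using Cons.IH[OF r]
      by (simp add: invw_Cons freduced_append_single)
  qed
qed (simp add: invw_def)

lemma freduce_invw: "freduce (xs @ invw xs) = []"
proof (induction xs)
  case Nil then show ?case by (simp add: invw_def freduce_def)
next
  case (Cons x xs)
  have "freduce ((x # xs) @ invw (x # xs)) = cancel_step x (freduce ((xs @ invw xs) @ [(fst x, \<not> snd x)]))"
    by (simp add: invw_Cons freduce_def)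
  also have "freduce ((xs @ invw xs) @ [(fst x, \<not> snd x)]) = freduce (freduce (xs @ invw xs) @ [(fst x, \<not> snd x)])"
    by (simp add: freduce_freduce_append)
  also have "\<dots> = [(fst x, \<not> snd x)]" using Cons by (simp add: freduce_def cancel_step_def)
  finally show ?case by (simp add: cancel_step_def)
qed

lemma Rep_ginv: "Rep_fg (ginv x) = invw (Rep_fg x)"
  unfolding ginv_def invw_def[symmetric] by (simp add: Rep_Abs_red freduced_invw Rep_red)

lemma gmul_ginv_right[simp]: "gmul x (ginv x) = gone"
  by (simp add: gmul_def Rep_ginv freduce_invw gone_def)

lemma gmul_ginv_left[simp]: "gmul (ginv x) x = gone"
proof -
  have "freduce (invw (Rep_fg x) @ Rep_fg x) = []"
    using freduce_invw[of "invw (Rep_fg x)"] by simp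
  then show ?thesis by (simp add: gmul_def Rep_ginv gone_def)
qed

lemma ginv_ginv[simp]: "ginv (ginv x) = x"
  by (simp add: ginv_def invw_def[symmetric] Rep_Abs_red freduced_invw Rep_red Rep_fg_inverse)

lemma gmul_cancel_left: "gmul a x = gmul a y \<Longrightarrow> x = y"
  by (metis gmul_assoc gmul_ginv_left gmul_gone_left)

lemma gmul_cancel_right: "gmul x a = gmul y a \<Longrightarrow> x = y"
  by (metis gmul_assoc gmul_ginv_right gmul_gone_right)

lemma ginv_gmul: "ginv (gmul a b) = gmul (ginv b) (ginv a)"
proof -
  have "gmul (gmul a b) (ginv (gmul a b)) = gmul (gmul a b) (gmul (ginv b) (ginv a))"
    by (simp add: gmul_assoc) (metis gmul_assoc gmul_ginv_right gmul_gone_left)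
  then show ?thesis by (rule gmul_cancel_left)
qed

lemma ginv_gone[simp]: "ginv gone = gone"
  by (metis gmul_ginv_left gmul_gone_right)


definition slt :: "nat set \<Rightarrow> nat set \<Rightarrow> bool" where
  "slt A B \<longleftrightarrow> (\<forall>a\<in>A. \<forall>b\<in>B. a < b)"

definition pos :: "nat set \<Rightarrow> letter list" where
  "pos A = map (\<lambda>i. (i, True)) (sorted_list_of_set A)"

definition wd :: "nat set \<Rightarrow> fg" where
  "wd A = Abs_fg (pos A)"

lemma freduced_allpos: "\<forall>l\<in>set xs. snd l \<Longrightarrow> freduced xs"
  by (induction xs rule: freduced.induct) auto

lemma Rep_wd: "Rep_fg (wd A) = pos A"
  unfolding wd_def by (rule Rep_Abs_red, rule freduced_allpos) (auto simp: pos_def)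

lemma set_pos_fst: "finite A \<Longrightarrow> set (map fst (pos A)) = A"
  by (simp add: pos_def comp_def)

lemma wd_inj: "finite A \<Longrightarrow> finite B \<Longrightarrow> wd A = wd B \<Longrightarrow> A = B"
  by (metis Rep_wd set_pos_fst)

lemma wd_empty[simp]: "wd {} = gone"
  by (simp add: wd_def gone_def pos_def)

lemma sorted_union:
  assumes "finite A" "finite B" "slt A B"
  shows "sorted_list_of_set (A \<union> B) = sorted_list_of_set A @ sorted_list_of_set B"
proof -
  have "sorted_wrt (<) (sorted_list_of_set A @ sorted_list_of_set B)"
    using assms by (auto simp: sorted_wrt_append slt_def)
  moreover have "sorted_wrt (<) (sorted_list_of_set (A \<union> B))" by simp
  moreover have "set (sorted_list_of_set (A \<union> B)) = set (sorted_list_of_set A @ sorted_list_of_set B)"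
    using assms by simp
  ultimately show ?thesis by (metis strict_sorted_equal)
qed

lemma gmul_wd:
  assumes "finite A" "finite B" "slt A B"
  shows "gmul (wd A) (wd B) = wd (A \<union> B)"
proof -
  have "pos A @ pos B = pos (A \<union> B)" using sorted_union[OF assms] by (simp add: pos_def)
  moreover have "freduced (pos A @ pos B)" by (rule freduced_allpos) (auto simp: pos_def)
  ultimately have "freduce (Rep_fg (wd A) @ Rep_fg (wd B)) = pos (A \<union> B)"
    by (simp add: Rep_wd freduce_id)
  then show ?thesis by (simp add: gmul_def wd_def)
qed

lemma freduced_append:
  "freduced (xs @ ys) \<longleftrightarrow> freduced xs \<and> freduced ys \<and> (xs = [] \<or> ys = [] \<or> \<not> canc (last xs) (hd ys))"
proof (induction xs)
  case (Cons x xs)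
  then show ?case by (cases xs; cases ys) (auto simp: freduced_Cons)
qed simp

lemma sorted_le_last: "sorted l \<Longrightarrow> x \<in> set l \<Longrightarrow> x \<le> last l"
  by (induction l) (auto simp: last_in_set)

lemma last_sorted: "finite A \<Longrightarrow> A \<noteq> {} \<Longrightarrow> last (sorted_list_of_set A) = Max A"
proof -
  assume f: "finite A" and ne: "A \<noteq> {}"
  let ?l = "sorted_list_of_set A"
  have ln: "?l \<noteq> []" using f ne by simp
  have "last ?l \<in> A" using ln f by (metis last_in_set set_sorted_list_of_set)
  moreover have "\<forall>a\<in>A. a \<le> last ?l"
    using f sorted_le_last[of ?l] by simp
  ultimately show ?thesis by (intro sym[OF Max_eqI] f) auto
qed

definition canon :: "nat set \<Rightarrow> nat set \<Rightarrow> bool" where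
  "canon A B \<longleftrightarrow> finite A \<and> finite B \<and> (A = {} \<or> B = {} \<or> Max A \<noteq> Max B)"

lemma Rep_AB:
  assumes "canon A B"
  shows "Rep_fg (gmul (wd A) (ginv (wd B))) = pos A @ invw (pos B)"
proof -
  have fa: "finite A" and fb: "finite B" using assms by (auto simp: canon_def)
  have r1: "freduced (pos A)" by (rule freduced_allpos) (auto simp: pos_def)
  have r2: "freduced (invw (pos B))" using Rep_wd Rep_red freduced_invw by metis
  have j: "pos A = [] \<or> invw (pos B) = [] \<or> \<not> canc (last (pos A)) (hd (invw (pos B)))"
  proof (cases "A = {} \<or> B = {}")
    case True then show ?thesis using fa fb by (auto simp: pos_def invw_def)
  next
    case False
    then have "Max A \<noteq> Max B" using assms by (auto simp: canon_def)
    moreover have "last (pos A) = (Max A, True)" using False fa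
      by (simp add: pos_def last_map last_sorted)
    moreover have "hd (invw (pos B)) = (Max B, False)" using False fb
      by (simp add: pos_def invw_def hd_rev last_map last_sorted)
    ultimately show ?thesis by (simp add: canc_def)
  qed
  have "freduced (pos A @ invw (pos B))" using r1 r2 j by (simp add: freduced_append)
  then show ?thesis by (simp add: Rep_gmul Rep_ginv Rep_wd freduce_id)
qed

lemma dec_unique:
  assumes "canon A B" "canon A' B'"
    and "gmul (wd A) (ginv (wd B)) = gmul (wd A') (ginv (wd B'))"
  shows "A = A' \<and> B = B'"
proof -
  have e: "pos A @ invw (pos B) = pos A' @ invw (pos B')"
    using Rep_AB[OF assms(1)] Rep_AB[OF assms(2)] assms(3) by simp
  have fp: "\<And>C. filter snd (pos C) = pos C" by (simp add: pos_def comp_def)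
  have fn: "\<And>C. filter snd (invw (pos C)) = []" by (simp add: pos_def invw_def comp_def filter_empty_conv)
  have fp2: "\<And>C. filter (\<lambda>l. \<not> snd l) (pos C) = []" by (simp add: pos_def comp_def filter_empty_conv)
  have fn2: "\<And>C. filter (\<lambda>l. \<not> snd l) (invw (pos C)) = invw (pos C)" by (simp add: pos_def invw_def comp_def)
  have "pos A = pos A'" using arg_cong[OF e, of "filter snd"] by (simp add: fp fn)
  moreover have "invw (pos B) = invw (pos B')" using arg_cong[OF e, of "filter (\<lambda>l. \<not> snd l)"] by (simp add: fp2 fn2)
  then have "pos B = pos B'" by (metis invw_invw)
  ultimately show ?thesis using assms set_pos_fst unfolding canon_def by metis
qed

definition dec :: "fg \<Rightarrow> nat set \<times> nat set" where
  "dec x = (SOME AB. canon (fst AB) (snd AB) \<and> x = gmul (wd (fst AB)) (ginv (wd (snd AB))))"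

lemma dec_eq:
  assumes "canon A B" "x = gmul (wd A) (ginv (wd B))"
  shows "dec x = (A, B)"
proof -
  have "canon (fst (dec x)) (snd (dec x)) \<and> x = gmul (wd (fst (dec x))) (ginv (wd (snd (dec x))))"
    unfolding dec_def by (rule someI[of _ "(A,B)"]) (use assms in simp)
  then show ?thesis using dec_unique assms by (metis prod.collapse)
qed

lemma KE:
  assumes fU: "finite U" and fV: "finite V" and e: "gmul x (wd U) = wd V"
  shows "\<exists>A B T. canon A B \<and> x = gmul (wd A) (ginv (wd B)) \<and> U = B \<union> T \<and> V = A \<union> T
           \<and> slt B T \<and> slt A T \<and> finite T"
proof -
  define T where "T = {t \<in> V \<inter> U. \<forall>s\<ge>t. s \<in> V \<longleftrightarrow> s \<in> U}"
  define A where "A = V - T"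
  define B where "B = U - T"
  have fT: "finite T" using fU unfolding T_def by auto
  have fA: "finite A" "finite B" using fU fV by (auto simp: A_def B_def)
  have sA: "slt A T"
    unfolding slt_def
  proof (intro ballI, rule ccontr)
    fix a t assume a: "a \<in> A" and t: "t \<in> T" and "\<not> a < t"
    then have "t \<le> a" by simp
    then have "\<forall>s\<ge>a. s \<in> V \<longleftrightarrow> s \<in> U" using t unfolding T_def by auto
    moreover have "a \<in> V" using a by (simp add: A_def)
    ultimately have "a \<in> T" unfolding T_def by auto
    then show False using a by (simp add: A_def)
  qed
  have sB: "slt B T"
    unfolding slt_def
  proof (intro ballI, rule ccontr)
    fix a t assume a: "a \<in> B" and t: "t \<in> T" and "\<not> a < t"
    then have "t \<le> a" by simp
    then have "\<forall>s\<ge>a. s \<in> V \<longleftrightarrow> s \<in> U" using t unfolding T_def by auto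
    moreover have "a \<in> U" using a by (simp add: B_def)
    ultimately have "a \<in> T" unfolding T_def by auto
    then show False using a by (simp add: B_def)
  qed
  have TV: "T \<subseteq> V" and TU: "T \<subseteq> U" unfolding T_def by auto
  have c: "canon A B"
    unfolding canon_def
  proof (intro conjI fA, rule ccontr)
    assume "\<not> (A = {} \<or> B = {} \<or> Max A \<noteq> Max B)"
    then have ne: "A \<noteq> {}" "B \<noteq> {}" and m: "Max A = Max B" by auto
    define m where "m = Max A"
    have mA: "m \<in> A" using ne fA by (simp add: m_def)
    have mB: "m \<in> B" using ne fA m by (simp add: m_def)
    have mV: "m \<in> V" using mA by (simp add: A_def)
    have mU: "m \<in> U" using mB by (simp add: B_def)
    have all: "\<forall>s\<ge>m. s \<in> V \<longleftrightarrow> s \<in> U"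
    proof (intro allI impI)
      fix s assume sm: "m \<le> s"
      show "s \<in> V \<longleftrightarrow> s \<in> U"
      proof (cases "s = m")
        case True then show ?thesis using mV mU by simp
      next
        case False
        then have gt: "m < s" using sm by simp
        have nA: "s \<notin> A" using gt Max_ge[OF fA(1), of s] m_def by auto
        have nB: "s \<notin> B" using gt Max_ge[OF fA(2), of s] m m_def by auto
        show ?thesis
        proof
          assume "s \<in> V" then have "s \<in> T" using nA by (simp add: A_def)
          then show "s \<in> U" using TU by blast
        next
          assume "s \<in> U" then have "s \<in> T" using nB by (simp add: B_def)
          then show "s \<in> V" using TV by blast
        qed
      qed
    qed
    have "m \<in> T" unfolding T_def using mV mU all by blast
    then show False using mA by (simp add: A_def)
  qed
  have eV: "V = A \<union> T" and eU: "U = B \<union> T" using TV TU by (auto simp: A_def B_def)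
  have wV: "wd V = gmul (wd A) (wd T)" using gmul_wd[OF fA(1) fT sA] eV by simp
  have wU: "wd U = gmul (wd B) (wd T)" using gmul_wd[OF fA(2) fT sB] eU by simp
  have "gmul (gmul x (wd B)) (wd T) = gmul (wd A) (wd T)"
    using e wV wU by (simp add: gmul_assoc)
  then have "gmul x (wd B) = wd A" by (rule gmul_cancel_right)
  then have "gmul (gmul x (wd B)) (ginv (wd B)) = gmul (wd A) (ginv (wd B))" by simp
  then have "x = gmul (wd A) (ginv (wd B))" by (simp add: gmul_assoc)
  then show ?thesis using c eU eV sA sB fT by (intro exI[of _ A] exI[of _ B] exI[of _ T]) simp
qed

lemma K:
  assumes fU: "finite U" and fV: "finite V" and e: "gmul x (wd U) = wd V"
  shows "canon (fst (dec x)) (snd (dec x)) \<and> x = gmul (wd (fst (dec x))) (ginv (wd (snd (dec x))))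
     \<and> (\<exists>T. U = snd (dec x) \<union> T \<and> V = fst (dec x) \<union> T \<and> slt (snd (dec x)) T \<and> slt (fst (dec x)) T \<and> finite T)"
proof -
  obtain A B T where h: "canon A B" "x = gmul (wd A) (ginv (wd B))" "U = B \<union> T" "V = A \<union> T"
    "slt B T" "slt A T" "finite T"
    using KE[OF assms] by blast
  have "dec x = (A, B)" using dec_eq h by blast
  then show ?thesis using h by auto
qed


section \<open>Ultrafilter basics\<close>

lemma uf_UNIV: "is_ultrafilter U \<Longrightarrow> UNIV \<in> U" by (simp add: is_ultrafilter_def)
lemma uf_empty: "is_ultrafilter U \<Longrightarrow> {} \<notin> U" by (simp add: is_ultrafilter_def)
lemma uf_int: "is_ultrafilter U \<Longrightarrow> A \<in> U \<Longrightarrow> B \<in> U \<Longrightarrow> A \<inter> B \<in> U"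
  by (simp add: is_ultrafilter_def)
lemma uf_mono: "is_ultrafilter U \<Longrightarrow> A \<in> U \<Longrightarrow> A \<subseteq> B \<Longrightarrow> B \<in> U"
  unfolding is_ultrafilter_def by blast
lemma uf_compl: "is_ultrafilter U \<Longrightarrow> A \<notin> U \<Longrightarrow> - A \<in> U"
  unfolding is_ultrafilter_def by blast
lemma uf_ne: "is_ultrafilter U \<Longrightarrow> A \<in> U \<Longrightarrow> \<exists>x. x \<in> A"
  using uf_empty[of U] by (metis ex_in_conv)
lemma uf_ne2: "is_ultrafilter U \<Longrightarrow> A \<in> U \<Longrightarrow> B \<in> U \<Longrightarrow> \<exists>x. x \<in> A \<and> x \<in> B"
  using uf_ne uf_int by fastforce
lemma uf_ne3: "is_ultrafilter U \<Longrightarrow> A \<in> U \<Longrightarrow> B \<in> U \<Longrightarrow> C \<in> U \<Longrightarrow> \<exists>x. x \<in> A \<and> x \<in> B \<and> x \<in> C"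
  using uf_ne uf_int by (metis IntE)

lemma uf_union: "is_ultrafilter U \<Longrightarrow> A \<union> B \<in> U \<Longrightarrow> A \<in> U \<or> B \<in> U"
proof (rule ccontr)
  assume u: "is_ultrafilter U" and ab: "A \<union> B \<in> U" and n: "\<not> (A \<in> U \<or> B \<in> U)"
  then have "- A \<in> U" "- B \<in> U" using uf_compl by auto
  then have "(A \<union> B) \<inter> (- A \<inter> - B) \<in> U" using u ab uf_int by metis
  moreover have "(A \<union> B) \<inter> (- A \<inter> - B) = {}" by auto
  ultimately show False using uf_empty[OF u] by simp
qed

lemma uf_finite_union:
  assumes u: "is_ultrafilter U" and f: "finite I"
  shows "(\<Union>i\<in>I. F i) \<in> U \<Longrightarrow> \<exists>i\<in>I. F i \<in> U"
  using f
proof (induction I)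
  case empty then show ?case using uf_empty[OF u] by simp
next
  case (insert i I)
  then have "F i \<union> (\<Union>j\<in>I. F j) \<in> U" by simp
  then show ?case using insert u uf_union by blast
qed

lemma uf_subset_eq:
  assumes "is_ultrafilter U" "is_ultrafilter V" "U \<subseteq> V"
  shows "U = V"
proof
  show "V \<subseteq> U"
  proof
    fix A assume "A \<in> V"
    show "A \<in> U"
    proof (rule ccontr)
      assume "A \<notin> U"
      then have "- A \<in> V" using assms uf_compl by blast
      then have "A \<inter> - A \<in> V" using \<open>A \<in> V\<close> assms uf_int by blast
      then show False using uf_empty[OF assms(2)] by simp
    qed
  qed
qed (use assms in auto)

definition np :: "'a set set \<Rightarrow> bool" where "np U \<longleftrightarrow> (\<forall>z. {z} \<notin> U)"

lemma np_iff: "is_ultrafilter U \<Longrightarrow> U \<notin> range principal \<longleftrightarrow> np U"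
proof
  assume u: "is_ultrafilter U" and n: "U \<notin> range principal"
  show "np U" unfolding np_def
  proof (intro allI notI)
    fix z assume z: "{z} \<in> U"
    have "U = principal z"
    proof (intro set_eqI iffI)
      fix A assume "A \<in> U"
      then have "A \<inter> {z} \<in> U" using z u uf_int by blast
      then have "z \<in> A" using u uf_empty by (metis Int_empty_right Int_insert_right)
      then show "A \<in> principal z" by (simp add: principal_def)
    next
      fix A assume "A \<in> principal z"
      then show "A \<in> U" using z u uf_mono by (auto simp: principal_def)
    qed
    then show False using n by auto
  qed
next
  assume "np U"
  then show "U \<notin> range principal" by (auto simp: np_def principal_def)
qed

lemma np_finite: assumes "is_ultrafilter U" "np U" "finite A" shows "A \<notin> U"
proof
  assume "A \<in> U"
  then have "(\<Union>z\<in>A. {z}) \<in> U" by simp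
  then show False using uf_finite_union[OF assms(1) assms(3), where F="\<lambda>z. {z}"] assms(2) by (auto simp: np_def)
qed

lemma np_diff: assumes "is_ultrafilter U" "np U" "finite F" "A \<in> U" shows "A - F \<in> U"
proof -
  have "- F \<in> U" using np_finite assms uf_compl by blast
  then show ?thesis using assms uf_int by (metis Diff_eq)
qed

lemma uf_preimage: assumes "is_ultrafilter U" shows "is_ultrafilter {A. f -` A \<in> U}"
  using assms unfolding is_ultrafilter_def by (auto simp: vimage_Compl) (blast intro: vimage_mono)+

section \<open>Shifts\<close>

lemma umult_pl: "umult (principal g) r = {A. {y. gmul g y \<in> A} \<in> r}"
  by (simp add: umult_def principal_def)

lemma umult_pr: "umult q (principal g) = {A. {x. gmul x g \<in> A} \<in> q}"
  by (simp add: umult_def principal_def)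

lemma uf_pl: "is_ultrafilter r \<Longrightarrow> is_ultrafilter (umult (principal g) r)"
  using uf_preimage[of r "gmul g"] by (simp add: umult_pl vimage_def)

lemma uf_pr: "is_ultrafilter q \<Longrightarrow> is_ultrafilter (umult q (principal g))"
  using uf_preimage[of q "\<lambda>x. gmul x g"] by (simp add: umult_pr vimage_def)

lemma np_pl: assumes "np r" shows "np (umult (principal g) r)"
  unfolding np_def umult_pl mem_Collect_eq
proof (intro allI notI)
  fix z assume "{y. gmul g y \<in> {z}} \<in> r"
  moreover have "{y. gmul g y \<in> {z}} = {gmul (ginv g) z}"
    by (auto simp: gmul_assoc[symmetric])
  ultimately show False using assms by (simp add: np_def)
qed

lemma np_pr: assumes "np q" shows "np (umult q (principal g))"
  unfolding np_def umult_pr mem_Collect_eq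
proof (intro allI notI)
  fix z assume "{y. gmul y g \<in> {z}} \<in> q"
  moreover have "{y. gmul y g \<in> {z}} = {gmul z (ginv g)}"
    by (auto simp: gmul_assoc)
  ultimately show False using assms by (simp add: np_def)
qed

lemma pl_pl: "umult (principal g) (umult (principal h) r) = umult (principal (gmul g h)) r"
  by (simp add: umult_pl gmul_assoc)

lemma pr_pr: "umult (umult q (principal g)) (principal h) = umult q (principal (gmul g h))"
  by (simp add: umult_pr gmul_assoc)

lemma pl_one: "umult (principal gone) r = r"
  by (simp add: umult_pl)

lemma pr_one: "umult q (principal gone) = q"
  by (simp add: umult_pr)

lemma SH:
  assumes "gmul g h = gone"
  shows "umult (umult q (principal g)) (umult (principal h) r) = umult q r"
proof -
  have "\<And>x y. gmul (gmul x g) (gmul h y) = gmul x y"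
    using assms by (metis gmul_assoc gmul_gone_left)
  then show ?thesis by (simp add: umult_def principal_def)
qed

section \<open>Blocks\<close>

definition blocks :: "(nat \<Rightarrow> nat set) \<Rightarrow> bool" where
  "blocks D \<longleftrightarrow> (\<forall>n. finite (D n) \<and> D n \<noteq> {}) \<and> (\<forall>n. slt (D n) (D (Suc n)))"

definition FU :: "(nat \<Rightarrow> nat set) \<Rightarrow> fg set" where
  "FU D = {wd (\<Union>n\<in>H. D n) | H. finite H \<and> H \<noteq> {}}"

definition W :: "fg set" where
  "W = wd ` {V. finite V \<and> V \<noteq> {}}"

lemma blocks_lt: assumes "blocks D" "n < m" shows "slt (D n) (D m)"
  using assms(2)
proof (induction m)
  case 0 then show ?case by simp
next
  case (Suc m)
  show ?case
  proof (cases "n = m")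
    case True then show ?thesis using assms(1) by (simp add: blocks_def)
  next
    case False
    then have "slt (D n) (D m)" using Suc by simp
    moreover have "slt (D m) (D (Suc m))" using assms(1) by (simp add: blocks_def)
    moreover have "D m \<noteq> {}" using assms(1) by (simp add: blocks_def)
    ultimately show ?thesis unfolding slt_def by (meson all_not_in_conv order.strict_trans)
  qed
qed

lemma blocks_noninter:
  assumes "blocks D" "a \<in> D k" "b \<in> D k" "f \<in> D n" "a \<le> f" "f \<le> b"
  shows "n = k"
proof (rule ccontr)
  assume "n \<noteq> k"
  then consider "n < k" | "k < n" by linarith
  then show False
  proof cases
    case 1 then have "f < a" using blocks_lt[OF assms(1) 1] assms unfolding slt_def by blast
    then show False using assms by simp
  next
    case 2 then have "b < f" using blocks_lt[OF assms(1) 2] assms unfolding slt_def by blast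
    then show False using assms by simp
  qed
qed

lemma blocks_unique: "blocks D \<Longrightarrow> e \<in> D k \<Longrightarrow> e \<in> D n \<Longrightarrow> n = k"
  using blocks_noninter[of D e k e e n] by simp

lemma blocks_finite: "blocks D \<Longrightarrow> finite (D n)" by (simp add: blocks_def)
lemma blocks_ne: "blocks D \<Longrightarrow> D n \<noteq> {}" by (simp add: blocks_def)

lemma FU_mem:
  assumes "blocks D" "wd V \<in> FU D" "finite V"
  shows "\<exists>H. finite H \<and> H \<noteq> {} \<and> V = (\<Union>n\<in>H. D n)"
proof -
  obtain H where H: "finite H" "H \<noteq> {}" "wd V = wd (\<Union>n\<in>H. D n)"
    using assms(2) by (auto simp: FU_def)
  have "finite (\<Union>n\<in>H. D n)" using H(1) assms(1) blocks_finite by blast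
  then have "V = (\<Union>n\<in>H. D n)" using wd_inj H(3) assms(3) by blast
  then show ?thesis using H by blast
qed

lemma FU_intro: "finite H \<Longrightarrow> H \<noteq> {} \<Longrightarrow> wd (\<Union>n\<in>H. D n) \<in> FU D"
  by (auto simp: FU_def)

lemma FU_W: assumes "blocks D" shows "FU D \<subseteq> W"
proof
  fix x assume "x \<in> FU D"
  then obtain H where H: "finite H" "H \<noteq> {}" "x = wd (\<Union>n\<in>H. D n)" by (auto simp: FU_def)
  have "finite (\<Union>n\<in>H. D n)" using H(1) assms blocks_finite by blast
  moreover have "(\<Union>n\<in>H. D n) \<noteq> {}" using H(2) assms blocks_ne by blast
  ultimately show "x \<in> W" using H(3) by (auto simp: W_def)
qed

lemma W_mem: "x \<in> W \<Longrightarrow> \<exists>V. finite V \<and> V \<noteq> {} \<and> x = wd V"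
  by (auto simp: W_def)

lemma gprod_blocks:
  assumes "sorted_wrt (<) ns" "\<And>i j. i < j \<Longrightarrow> slt (E i) (E j)" "\<And>i. finite (E i)"
  shows "gprod (map (\<lambda>n. wd (E n)) ns) = wd (\<Union>n\<in>set ns. E n)"
  using assms(1)
proof (induction ns)
  case Nil then show ?case by (simp add: gprod_def)
next
  case (Cons n ns)
  have IH: "gprod (map (\<lambda>n. wd (E n)) ns) = wd (\<Union>n\<in>set ns. E n)" using Cons by simp
  have s: "slt (E n) (\<Union>m\<in>set ns. E m)" using Cons.prems assms(2) unfolding slt_def by fastforce
  have f: "finite (\<Union>m\<in>set ns. E m)" using assms(3) by blast
  have "gprod (map (\<lambda>n. wd (E n)) (n # ns)) = gmul (wd (E n)) (wd (\<Union>n\<in>set ns. E n))"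
    using IH by (simp add: gprod_def)
  also have "\<dots> = wd (E n \<union> (\<Union>n\<in>set ns. E n))" using gmul_wd[OF assms(3) f s] .
  finally show ?case by simp
qed

lemma gen_wd: "gen n = wd {n}"
  by (simp add: gen_def wd_def pos_def)

lemma gprod_gen: "finite a \<Longrightarrow> gprod (map gen (sorted_list_of_set a)) = wd a"
proof -
  assume f: "finite a"
  have "map gen (sorted_list_of_set a) = map (\<lambda>n. wd {n}) (sorted_list_of_set a)"
    by (simp add: gen_wd)
  also have "gprod \<dots> = wd (\<Union>n\<in>set (sorted_list_of_set a). {n})"
    by (rule gprod_blocks) (auto simp: slt_def)
  finally show ?thesis using f by simp
qed

lemma psub_blocks:
  assumes "product_subsystem y gen"
  shows "\<exists>D. blocks D \<and> FP y = FU D"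
proof -
  obtain a where a: "\<forall>n. finite (a n) \<and> a n \<noteq> {}" "\<forall>n. Max (a n) < Min (a (Suc n))"
    "\<forall>n. y n = gprod (map gen (sorted_list_of_set (a n)))"
    using assms by (auto simp: product_subsystem_def)
  have b: "blocks a" unfolding blocks_def slt_def
  proof (intro conjI allI ballI)
    fix n x z assume "x \<in> a n" "z \<in> a (Suc n)"
    then show "x < z" using a(1) a(2) by (meson Max_ge Min_le le_less_trans less_le_trans)
  qed (use a(1) in auto)
  have y: "y = (\<lambda>n. wd (a n))" using a(3) a(1) gprod_gen by auto
  have "FP y = FU a"
  proof -
    have "\<And>H. finite H \<Longrightarrow> gprod (map y (sorted_list_of_set H)) = wd (\<Union>n\<in>H. a n)"
    proof -
      fix H :: "nat set" assume fH: "finite H"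
      have "gprod (map (\<lambda>n. wd (a n)) (sorted_list_of_set H)) = wd (\<Union>n\<in>set (sorted_list_of_set H). a n)"
        by (rule gprod_blocks) (use blocks_lt[OF b] a(1) in auto)
      then show "gprod (map y (sorted_list_of_set H)) = wd (\<Union>n\<in>H. a n)" using fH y by simp
    qed
    then show ?thesis unfolding FP_def FU_def by auto
  qed
  then show ?thesis using b by blast
qed

lemma vsp_FU:
  assumes "very_strongly_productive p" "A \<in> p"
  shows "\<exists>D. blocks D \<and> FU D \<subseteq> A \<and> FU D \<in> p"
proof -
  obtain y where "product_subsystem y gen" "FP y \<subseteq> A" "FP y \<in> p"
    using assms by (auto simp: very_strongly_productive_def)
  then show ?thesis using psub_blocks by metis
qed


lemma dec_wd: "finite V \<Longrightarrow> dec (wd V) = (V, {})"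
  by (rule dec_eq) (auto simp: canon_def)

lemma W_dec: assumes "a \<in> W" shows "a = wd (fst (dec a)) \<and> finite (fst (dec a)) \<and> fst (dec a) \<noteq> {}"
proof -
  obtain V where V: "finite V" "V \<noteq> {}" "a = wd V" using assms by (auto simp: W_def)
  then have "fst (dec a) = V" using dec_wd by simp
  then show ?thesis using V by simp
qed

lemma mult_W_W:
  assumes "finite A" "finite U" "gmul (wd A) (wd U) = wd V" "finite V"
  shows "slt A U \<and> V = A \<union> U"
proof -
  have d: "dec (wd A) = (A, {})" using dec_wd assms(1) by simp
  obtain T where "U = snd (dec (wd A)) \<union> T" "V = fst (dec (wd A)) \<union> T" "slt (fst (dec (wd A))) T"
    using K[OF assms(2) assms(4) assms(3)] by blast
  then show ?thesis using d by simp
qed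

lemma SC_claim:
  assumes D: "blocks D" and fA: "finite Aset" and neA: "Aset \<noteq> {}"
    and R: "\<exists>u. u \<in> R"
    and RP: "\<And>u. u \<in> R \<Longrightarrow> \<exists>U H. u = wd U \<and> finite U \<and> U \<noteq> {} \<and> slt Aset U \<and> finite H \<and> H \<noteq> {}
                 \<and> Aset \<union> U = (\<Union>n\<in>H. D n)"
  shows "(wd Aset \<in> FU D \<and> R \<subseteq> FU D) \<or>
         (\<exists>c. Aset \<subseteq> {..<c} \<and> (\<forall>u\<in>R. \<exists>U. u = wd U \<and> finite U \<and> c \<in> U \<and> (\<forall>e\<in>U. c \<le> e)))"
proof -
  define m where "m = Max Aset"
  have mA: "m \<in> Aset" and mle: "\<And>e. e \<in> Aset \<Longrightarrow> e \<le> m" using fA neA by (auto simp: m_def)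
  obtain u0 where u0: "u0 \<in> R" using R by blast
  obtain U0 H0 where h0: "u0 = wd U0" "finite U0" "U0 \<noteq> {}" "slt Aset U0" "finite H0" "H0 \<noteq> {}"
    "Aset \<union> U0 = (\<Union>n\<in>H0. D n)" using RP[OF u0] by blast
  obtain k where mk: "m \<in> D k" using h0(7) mA by blast
  have kH: "\<And>U H. Aset \<union> U = (\<Union>n\<in>H. D n) \<Longrightarrow> k \<in> H"
  proof -
    fix U H assume "Aset \<union> U = (\<Union>n\<in>H. D n)"
    then obtain n where "n \<in> H" "m \<in> D n" using mA by blast
    then show "k \<in> H" using blocks_unique[OF D mk] by metis
  qed
  show ?thesis
  proof (cases "D k \<subseteq> Aset")
    case True
    have good: "u \<in> FU D" if u: "u \<in> R" for u
    proof -
      obtain U H where h: "u = wd U" "finite U" "U \<noteq> {}" "slt Aset U" "finite H" "H \<noteq> {}"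
        "Aset \<union> U = (\<Union>n\<in>H. D n)" using RP[OF u] by blast
      have "U = (\<Union>n\<in>{n\<in>H. k < n}. D n)"
      proof (intro set_eqI iffI)
        fix e assume e: "e \<in> U"
        then obtain n where n: "n \<in> H" "e \<in> D n" using h(7) by blast
        have me: "m < e" using h(4) mA e by (simp add: slt_def)
        have "k < n"
        proof (rule ccontr)
          assume "\<not> k < n"
          then consider "n = k" | "n < k" by linarith
          then show False
          proof cases
            case 1 then have "e \<in> Aset" using True n by blast
            then show False using h(4) e by (auto simp: slt_def)
          next
            case 2 then have "e < m" using blocks_lt[OF D 2] n mk by (simp add: slt_def)
            then show False using me by simp
          qed
        qed
        then show "e \<in> (\<Union>n\<in>{n\<in>H. k < n}. D n)" using n by blast
      next
        fix e assume "e \<in> (\<Union>n\<in>{n\<in>H. k < n}. D n)"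
        then obtain n where n: "n \<in> H" "k < n" "e \<in> D n" by blast
        have "m < e" using blocks_lt[OF D n(2)] mk n(3) by (simp add: slt_def)
        then have "e \<notin> Aset" using mle by force
        moreover have "e \<in> Aset \<union> U" using h(7) n by blast
        ultimately show "e \<in> U" by blast
      qed
      moreover have "{n\<in>H. k < n} \<noteq> {}" using h(3) calculation by auto
      moreover have "finite {n\<in>H. k < n}" using h(5) by simp
      ultimately show "u \<in> FU D" using h(1) FU_intro by metis
    qed
    have "Aset = (\<Union>n\<in>{n\<in>H0. n \<le> k}. D n)"
    proof (intro set_eqI iffI)
      fix e assume e: "e \<in> Aset"
      then obtain n where n: "n \<in> H0" "e \<in> D n" using h0(7) by blast
      have "n \<le> k"
      proof (rule ccontr)
        assume "\<not> n \<le> k" then have "k < n" by simp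
        then have "m < e" using blocks_lt[OF D] mk n(2) by (simp add: slt_def)
        then show False using mle e by force
      qed
      then show "e \<in> (\<Union>n\<in>{n\<in>H0. n \<le> k}. D n)" using n by blast
    next
      fix e assume "e \<in> (\<Union>n\<in>{n\<in>H0. n \<le> k}. D n)"
      then obtain n where n: "n \<in> H0" "n \<le> k" "e \<in> D n" by blast
      show "e \<in> Aset"
      proof (cases "n = k")
        case True then show ?thesis using \<open>D k \<subseteq> Aset\<close> n by blast
      next
        case False
        then have "n < k" using n by simp
        then have "e < m" using blocks_lt[OF D] mk n(3) by (simp add: slt_def)
        moreover have "e \<in> Aset \<union> U0" using h0(7) n by blast
        moreover have "e \<in> U0 \<Longrightarrow> m < e" using h0(4) mA by (simp add: slt_def)
        ultimately show ?thesis by force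
      qed
    qed
    moreover have "{n\<in>H0. n \<le> k} \<noteq> {}" using neA calculation by auto
    moreover have "finite {n\<in>H0. n \<le> k}" using h0(5) by simp
    ultimately have "wd Aset \<in> FU D" using FU_intro by metis
    then show ?thesis using good by blast
  next
    case False
    define c where "c = Min (D k - Aset)"
    have fk: "finite (D k - Aset)" using blocks_finite[OF D] by blast
    have cin: "c \<in> D k" "c \<notin> Aset" using Min_in[OF fk] False unfolding c_def by auto
    have cmin: "\<And>e. e \<in> D k \<Longrightarrow> e \<notin> Aset \<Longrightarrow> c \<le> e" unfolding c_def using fk by auto
    have P: "\<exists>U. u = wd U \<and> finite U \<and> c \<in> U \<and> (\<forall>e\<in>U. c \<le> e)" if u: "u \<in> R" for u
    proof -
      obtain U H where h: "u = wd U" "finite U" "U \<noteq> {}" "slt Aset U" "finite H" "H \<noteq> {}"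
        "Aset \<union> U = (\<Union>n\<in>H. D n)" using RP[OF u] by blast
      have "k \<in> H" using kH h(7) by blast
      then have "c \<in> U" using cin h(7) by blast
      moreover have "\<forall>e\<in>U. c \<le> e"
      proof
        fix e assume e: "e \<in> U"
        then obtain n where n: "n \<in> H" "e \<in> D n" using h(7) by blast
        have me: "m < e" using h(4) mA e by (simp add: slt_def)
        consider "n < k" | "n = k" | "k < n" by linarith
        then show "c \<le> e"
        proof cases
          case 1 then have "e < m" using blocks_lt[OF D 1] n mk by (simp add: slt_def)
          then show ?thesis using me by simp
        next
          case 2 then have "e \<notin> Aset" using h(4) e by (auto simp: slt_def)
          then show ?thesis using cmin n 2 by blast
        next
          case 3 then have "c < e" using blocks_lt[OF D 3] n cin unfolding slt_def by blast
          then show ?thesis by simp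
        qed
      qed
      ultimately show ?thesis using h by blast
    qed
    have "Aset \<subseteq> {..<c}"
    proof -
      obtain U where "u0 = wd U" "finite U" "c \<in> U" using P[OF u0] by blast
      then have "U = U0" using h0 wd_inj by metis
      then show ?thesis using h0(4) \<open>c \<in> U\<close> by (auto simp: slt_def)
    qed
    then show ?thesis using P by blast
  qed
qed

lemma SC:
  assumes p: "is_ultrafilter p" and v: "very_strongly_productive p"
    and q: "is_ultrafilter q" and r: "is_ultrafilter r" and nq: "np q" and nr: "np r"
    and Wq: "W \<in> q" and Wr: "W \<in> r" and m: "umult q r = p"
  shows "q = p \<and> r = p"
proof -
  have "A \<in> q \<and> A \<in> r" if A: "A \<in> p" for A
  proof -
    obtain D where D: "blocks D" "FU D \<subseteq> A" "FU D \<in> p" using vsp_FU[OF v A] by blast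
    define R where "R a = {u. gmul a u \<in> FU D} \<inter> W" for a
    define Q where "Q = {x. {u. gmul x u \<in> FU D} \<in> r} \<inter> W"
    have "{x. {u. gmul x u \<in> FU D} \<in> r} \<in> q" using D(3) m unfolding umult_def by blast
    then have Qq: "Q \<in> q" unfolding Q_def using uf_int[OF q _ Wq] by blast
    have Rr: "R a \<in> r" if "a \<in> Q" for a
    proof -
      have "{u. gmul a u \<in> FU D} \<in> r" using that unfolding Q_def by blast
      then show ?thesis unfolding R_def using uf_int[OF r _ Wr] by blast
    qed
    define Cut where "Cut = {a\<in>Q. \<not> (a \<in> FU D \<and> R a \<subseteq> FU D)}"
    have claim: "(a \<in> FU D \<and> R a \<subseteq> FU D) \<or>
         (\<exists>c. fst (dec a) \<subseteq> {..<c} \<and> (\<forall>u\<in>R a. \<exists>U. u = wd U \<and> finite U \<and> c \<in> U \<and> (\<forall>e\<in>U. c \<le> e)))"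
      if aQ: "a \<in> Q" for a
    proof -
      have aW: "a \<in> W" using aQ by (simp add: Q_def)
      define Aset where "Aset = fst (dec a)"
      have ha: "a = wd Aset" "finite Aset" "Aset \<noteq> {}" using W_dec[OF aW] unfolding Aset_def by blast+
      have "(wd Aset \<in> FU D \<and> R a \<subseteq> FU D) \<or>
         (\<exists>c. Aset \<subseteq> {..<c} \<and> (\<forall>u\<in>R a. \<exists>U. u = wd U \<and> finite U \<and> c \<in> U \<and> (\<forall>e\<in>U. c \<le> e)))"
      proof (rule SC_claim[OF D(1) ha(2) ha(3)])
        show "\<exists>u. u \<in> R a" using uf_ne[OF r Rr[OF aQ]] .
      next
        fix u assume u: "u \<in> R a"
        then have uW: "u \<in> W" and uF: "gmul a u \<in> FU D" by (auto simp: R_def)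
        obtain U where U: "finite U" "U \<noteq> {}" "u = wd U" using W_mem[OF uW] by blast
        have "gmul a u \<in> W" using FU_W[OF D(1)] uF by blast
        then obtain V where V: "finite V" "V \<noteq> {}" "gmul a u = wd V" using W_mem by blast
        have sv: "slt Aset U \<and> V = Aset \<union> U" using mult_W_W[OF ha(2) U(1) _ V(1)] ha(1) U(3) V(3) by simp
        have "wd V \<in> FU D" using uF V(3) by simp
        then obtain H where H: "finite H" "H \<noteq> {}" "V = (\<Union>n\<in>H. D n)"
          using FU_mem[OF D(1) _ V(1)] by blast
        show "\<exists>U H. u = wd U \<and> finite U \<and> U \<noteq> {} \<and> slt Aset U \<and> finite H \<and> H \<noteq> {}
                 \<and> Aset \<union> U = (\<Union>n\<in>H. D n)"
          using U H sv by blast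
      qed
      then show ?thesis unfolding Aset_def[symmetric] by (simp only: ha(1)[symmetric])
    qed
    have fCut: "finite Cut"
    proof (cases "Cut = {}")
      case False
      then obtain a0 where a0: "a0 \<in> Cut" by blast
      then obtain c0 where c0: "fst (dec a0) \<subseteq> {..<c0}"
          "\<forall>u\<in>R a0. \<exists>U. u = wd U \<and> finite U \<and> c0 \<in> U \<and> (\<forall>e\<in>U. c0 \<le> e)"
        using claim unfolding Cut_def by blast
      have "Cut \<subseteq> wd ` Pow {..<c0}"
      proof
        fix a assume a: "a \<in> Cut"
        then obtain c where c: "fst (dec a) \<subseteq> {..<c}"
          "\<forall>u\<in>R a. \<exists>U. u = wd U \<and> finite U \<and> c \<in> U \<and> (\<forall>e\<in>U. c \<le> e)"
          using claim unfolding Cut_def by blast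
        obtain u where u: "u \<in> R a" "u \<in> R a0" using uf_ne2[OF r Rr Rr] a a0 unfolding Cut_def by blast
        obtain U where U: "u = wd U" "finite U" "c \<in> U" "\<forall>e\<in>U. c \<le> e" using c(2) u(1) by blast
        obtain U' where U': "u = wd U'" "finite U'" "c0 \<in> U'" "\<forall>e\<in>U'. c0 \<le> e" using c0(2) u(2) by blast
        have "U = U'" using U U' wd_inj by metis
        then have "c = c0" using U U' by force
        moreover have "a = wd (fst (dec a))" using W_dec a unfolding Cut_def Q_def by blast
        ultimately show "a \<in> wd ` Pow {..<c0}" using c(1) by blast
      qed
      then show ?thesis by (rule finite_subset) simp
    qed simp
    have QC: "Q - Cut \<in> q" using np_diff[OF q nq fCut Qq] .
    have sub: "Q - Cut \<subseteq> FU D" unfolding Cut_def by blast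
    have "A \<in> q" using uf_mono[OF q QC] sub D(2) by blast
    moreover obtain a where a: "a \<in> Q - Cut" using uf_ne[OF q QC] by blast
    then have "R a \<subseteq> FU D" unfolding Cut_def by blast
    then have "A \<in> r" using uf_mono[OF r Rr] a D(2) by blast
    ultimately show ?thesis by blast
  qed
  then have "p \<subseteq> q" "p \<subseteq> r" by auto
  then show ?thesis using uf_subset_eq p q r by metis
qed


lemma KQ:
  assumes "u \<in> W" "gmul x u \<in> W"
  shows "\<exists>U V T. u = wd U \<and> finite U \<and> gmul x u = wd V \<and> finite V \<and> U = snd (dec x) \<union> T
     \<and> V = fst (dec x) \<union> T \<and> slt (snd (dec x)) T \<and> slt (fst (dec x)) T"
proof -
  obtain U where U: "finite U" "U \<noteq> {}" "u = wd U" using W_mem assms(1) by blast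
  obtain V where V: "finite V" "V \<noteq> {}" "gmul x u = wd V" using W_mem assms(2) by blast
  obtain T where "U = snd (dec x) \<union> T" "V = fst (dec x) \<union> T" "slt (snd (dec x)) T" "slt (fst (dec x)) T"
    using K[OF U(1) V(1)] U(3) V(3) by metis
  then show ?thesis using U V by blast
qed

lemma KQ_dec:
  assumes "u \<in> W" "gmul x u \<in> W"
  shows "canon (fst (dec x)) (snd (dec x)) \<and> x = gmul (wd (fst (dec x))) (ginv (wd (snd (dec x))))"
proof -
  obtain U where U: "finite U" "U \<noteq> {}" "u = wd U" using W_mem assms(1) by blast
  obtain V where V: "finite V" "V \<noteq> {}" "gmul x u = wd V" using W_mem assms(2) by blast
  show ?thesis using K[OF U(1) V(1)] U(3) V(3) by blast
qed

definition cvx :: "nat set \<Rightarrow> nat set \<Rightarrow> bool" where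
  "cvx F V \<longleftrightarrow> (\<forall>f\<in>F. (\<exists>a\<in>V. a \<le> f) \<and> (\<exists>b\<in>V. f \<le> b) \<longrightarrow> f \<in> V)"

lemma unb: "infinite (F::nat set) \<Longrightarrow> \<exists>g\<in>F. N < g"
proof (rule ccontr)
  assume i: "infinite F" and "\<not> (\<exists>g\<in>F. N < g)"
  then have "F \<subseteq> {..N}" by (auto simp: not_less)
  then show False using i finite_subset by blast
qed

lemma unb_set: assumes "infinite (F::nat set)" "finite S" shows "\<exists>g\<in>F. \<forall>s\<in>S. s < g"
proof -
  obtain g where "g \<in> F" "Max (insert 0 S) < g" using unb[OF assms(1)] by blast
  moreover have "\<forall>s\<in>S. s \<le> Max (insert 0 S)" using assms(2) by simp
  ultimately show ?thesis by (meson le_less_trans)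
qed

lemma chain_fin:
  assumes p: "is_ultrafilter p" and v: "very_strongly_productive p"
    and q: "is_ultrafilter q" and r: "is_ultrafilter r"
    and Wr: "W \<in> r" and m: "umult q r = p"
    and Qdef: "Q = {x. {u. gmul x u \<in> W} \<in> r}"
  shows "finite ((\<lambda>x. snd (dec x)) ` Q)"
proof (rule ccontr)
  assume inf: "infinite ((\<lambda>x. snd (dec x)) ` Q)"
  define B where "B x = snd (dec x)" for x
  define A where "A x = fst (dec x)" for x
  define F where "F = \<Union> ((\<lambda>x. snd (dec x)) ` Q)"
  define R where "R x = {u. gmul x u \<in> W} \<inter> W" for x
  have Rr: "R x \<in> r" if "x \<in> Q" for x
  proof -
    have "{u. gmul x u \<in> W} \<in> r" using that Qdef by blast
    then show ?thesis unfolding R_def using uf_int[OF r _ Wr] by blast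
  qed
  have RK: "\<exists>U V T. u = wd U \<and> finite U \<and> gmul x u = wd V \<and> finite V \<and> U = B x \<union> T
     \<and> V = A x \<union> T \<and> slt (B x) T \<and> slt (A x) T" if "u \<in> R x" for x u
    using KQ that unfolding R_def A_def B_def by blast
  have fB: "finite (B x)" if xQ: "x \<in> Q" for x
  proof -
    obtain u where "u \<in> R x" using uf_ne[OF r Rr[OF xQ]] by blast
    then show ?thesis using KQ_dec unfolding R_def B_def canon_def by blast
  qed
  have BF: "B x \<subseteq> F" if "x \<in> Q" for x using that unfolding F_def B_def by blast
  have infF: "infinite F"
  proof
    assume "finite F"
    then have "finite (Pow F)" by simp
    moreover have "(\<lambda>x. snd (dec x)) ` Q \<subseteq> Pow F" unfolding F_def by blast
    ultimately show False using inf finite_subset by blast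
  qed
  have memF: "\<exists>y\<in>Q. g \<in> B y" if "g \<in> F" for g using that unfolding F_def B_def by blast
  have inU: "g \<in> U" if HH: "u \<in> R y" "u = wd U" "finite U" "g \<in> B y" for y u U g
  proof -
    obtain U' V T where o: "u = wd U'" "finite U'" "U' = B y \<union> T" using RK[OF HH(1)] by blast
    have "U = U'" using wd_inj[OF HH(3) o(2)] HH(2) o(1) by simp
    then show ?thesis using o(3) HH(4) by simp
  qed
  have Pc: "f \<in> B z" if HH: "y \<in> Q" "z \<in> Q" "f \<in> B y" "e \<in> B z" "f \<le> e" for y z f e
  proof -
    obtain u where u: "u \<in> R y" "u \<in> R z" using uf_ne2[OF r Rr Rr] HH(1,2) by blast
    obtain U V T where h: "u = wd U" "finite U" "U = B z \<union> T" "slt (B z) T" using RK[OF u(2)] by blast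
    have "f \<in> U" using inU[OF u(1) h(1) h(2) HH(3)] .
    show ?thesis
    proof (rule ccontr)
      assume "f \<notin> B z"
      then have "f \<in> T" using \<open>f \<in> U\<close> h(3) by simp
      then have "e < f" using h(4) HH(4) unfolding slt_def by blast
      then show False using HH(5) by simp
    qed
  qed
  define Ca where "Ca = {wd V | V. finite V \<and> V \<noteq> {} \<and> V \<inter> F = {}}"
  define Cb where "Cb = {wd V | V. finite V \<and> V \<noteq> {} \<and> V \<subseteq> F \<and> cvx F V}"
  define Ce where "Ce = {wd V | V. finite V \<and> V \<noteq> {} \<and> V \<inter> F \<noteq> {} \<and> \<not> (V \<subseteq> F \<and> cvx F V)}"
  have Wp: "W \<in> p"
  proof -
    obtain D where "blocks D" "FU D \<in> p" using vsp_FU[OF v uf_UNIV[OF p]] by blast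
    then show ?thesis using FU_W[of D] uf_mono[OF p, of "FU D" W] by blast
  qed
  have QQ: "Q \<in> q"
  proof -
    have "{x. {u. gmul x u \<in> W} \<in> r} \<in> q" using \<open>W \<in> p\<close> m unfolding umult_def by blast
    then show ?thesis using Qdef by simp
  qed
  have "W \<subseteq> Ca \<union> Cb \<union> Ce"
  proof
    fix w assume "w \<in> W"
    then obtain V where V: "finite V" "V \<noteq> {}" "w = wd V" using W_mem by blast
    show "w \<in> Ca \<union> Cb \<union> Ce"
    proof (cases "V \<inter> F = {}")
      case True then have "w \<in> Ca" unfolding Ca_def using V by blast
      then show ?thesis by simp
    next
      case False
      show ?thesis
      proof (cases "V \<subseteq> F \<and> cvx F V")
        case True then have "w \<in> Cb" unfolding Cb_def using V by blast
        then show ?thesis by simp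
      next
        case c: False
        have "w \<in> Ce" unfolding Ce_def using V False c by blast
        then show ?thesis by simp
      qed
    qed
  qed
  then have "(Ca \<union> Cb) \<union> Ce \<in> p" using uf_mono[OF p Wp] by blast
  then have "Ca \<union> Cb \<in> p \<or> Ce \<in> p" using uf_union[OF p] by blast
  then consider "Ca \<in> p" | "Cb \<in> p" | "Ce \<in> p" using uf_union[OF p] by blast
  then show False
  proof cases
    case 1
    have "{x. {u. gmul x u \<in> Ca} \<in> r} \<in> q" using 1 m unfolding umult_def by blast
    moreover have "Q \<in> q" using QQ .
    ultimately obtain x where x: "x \<in> Q" "{u. gmul x u \<in> Ca} \<in> r" using uf_ne2[OF q] by blast
    obtain g where g: "g \<in> F" "\<forall>s\<in>B x. s < g" using unb_set[OF infF fB[OF x(1)]] by blast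
    obtain y where y: "y \<in> Q" "g \<in> B y" using memF[OF g(1)] by blast
    obtain u where u: "gmul x u \<in> Ca" "u \<in> R x" "u \<in> R y" using uf_ne3[OF r x(2) Rr[OF x(1)] Rr[OF y(1)]] by blast
    obtain U V T where h: "u = wd U" "finite U" "gmul x u = wd V" "finite V" "U = B x \<union> T"
      "V = A x \<union> T" using RK[OF u(2)] by blast
    have "g \<in> U" using inU[OF u(3) h(1) h(2) y(2)] .
    moreover have "g \<notin> B x" using g(2) by blast
    ultimately have "g \<in> V" using h(5,6) by blast
    moreover obtain V' where V': "finite V'" "V' \<inter> F = {}" "gmul x u = wd V'" using u(1) unfolding Ca_def by blast
    moreover have "V = V'" using wd_inj[OF h(4) V'(1)] h(3) V'(3) by simp
    ultimately show False using g(1) by blast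
  next
    case 2
    obtain D where D: "blocks D" "FU D \<subseteq> Cb" "FU D \<in> p" using vsp_FU[OF v 2] by blast
    have fD: "\<And>n. finite (D n)" using blocks_finite[OF D(1)] .
    have m02: "wd (D 0 \<union> D 2) \<in> Cb" using FU_intro[of "{0,2::nat}" D] D(2) by auto
    have m1: "wd (D 1) \<in> Cb" using FU_intro[of "{1::nat}" D] D(2) by auto
    obtain V where V: "finite V" "V \<subseteq> F" "cvx F V" "wd (D 0 \<union> D 2) = wd V" using m02 unfolding Cb_def by blast
    have V': "V = D 0 \<union> D 2" using V wd_inj fD by (metis finite_Un)
    obtain V1 where V1: "finite V1" "V1 \<subseteq> F" "wd (D 1) = wd V1" using m1 unfolding Cb_def by blast
    have "D 1 \<subseteq> F" using V1 wd_inj fD by metis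
    obtain f where f: "f \<in> D 1" using blocks_ne[OF D(1)] by blast
    obtain a where a: "a \<in> D 0" using blocks_ne[OF D(1)] by blast
    obtain b where b: "b \<in> D 2" using blocks_ne[OF D(1)] by blast
    have s01: "slt (D 0) (D 1)" and s12: "slt (D 1) (D 2)" using blocks_lt[OF D(1)] by auto
    have "a \<le> f" "f \<le> b" using s01 s12 a b f by (auto simp: slt_def less_imp_le)
    then have "f \<in> V" using V(3) \<open>D 1 \<subseteq> F\<close> f a b V' unfolding cvx_def by blast
    then show False using V' f s01 s12 unfolding slt_def by auto
  next
    case 3
    obtain D where D: "blocks D" "FU D \<subseteq> Ce" "FU D \<in> p" using vsp_FU[OF v 3] by blast
    have "{x. {u. gmul x u \<in> FU D} \<in> r} \<in> q" using D(3) m unfolding umult_def by blast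
    moreover have "Q \<in> q" using QQ .
    ultimately obtain x where x: "x \<in> Q" "{u. gmul x u \<in> FU D} \<in> r" using uf_ne2[OF q] by blast
    define Re where "Re = {u. gmul x u \<in> FU D} \<inter> R x"
    have Rer: "Re \<in> r" unfolding Re_def using uf_int[OF r x(2) Rr[OF x(1)]] .
    have H1: "\<exists>U V T H. u = wd U \<and> finite U \<and> gmul x u = wd V \<and> U = B x \<union> T \<and> V = A x \<union> T
       \<and> slt (A x) T \<and> finite H \<and> H \<noteq> {} \<and> V = (\<Union>n\<in>H. D n)" if HH: "u \<in> Re" for u
    proof -
      obtain U V T where h: "u = wd U" "finite U" "gmul x u = wd V" "finite V" "U = B x \<union> T"
        "V = A x \<union> T" "slt (B x) T" "slt (A x) T" using RK HH unfolding Re_def by blast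
      have "wd V \<in> FU D" using HH h(3) unfolding Re_def by simp
      then obtain H where "finite H" "H \<noteq> {}" "V = (\<Union>n\<in>H. D n)" using FU_mem[OF D(1) _ h(4)] by blast
      then show ?thesis using h by blast
    qed
    have newT: "g \<in> T" if "u \<in> R y" "u = wd U" "finite U" "g \<in> B y" "U = B x \<union> T" "\<forall>s\<in>B x. s < g"
      for y u U T g
      using inU[OF that(1-4)] that(5,6) by auto
    obtain f1 where f1: "f1 \<in> F" "\<forall>s\<in>B x. s < f1" using unb_set[OF infF fB[OF x(1)]] by blast
    obtain x1 where x1: "x1 \<in> Q" "f1 \<in> B x1" using memF[OF f1(1)] by blast
    obtain u1 where u1: "u1 \<in> Re" "u1 \<in> R x1" using uf_ne2[OF r Rer Rr[OF x1(1)]] by blast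
    obtain U1 V1 T1 H1 where h1: "u1 = wd U1" "finite U1" "gmul x u1 = wd V1" "U1 = B x \<union> T1"
      "V1 = A x \<union> T1" "V1 = (\<Union>n\<in>H1. D n)" using H1[OF u1(1)] by blast
    have "f1 \<in> T1" using newT[OF u1(2) h1(1) h1(2) x1(2) h1(4) f1(2)] .
    then obtain k where k: "f1 \<in> D k" using h1(5,6) by blast
    obtain g where g: "g \<in> F" "\<forall>s\<in>D k. s < g" using unb_set[OF infF blocks_finite[OF D(1)]] by blast
    obtain x2 where x2: "x2 \<in> Q" "g \<in> B x2" using memF[OF g(1)] by blast
    obtain u2 where u2: "u2 \<in> Re" "u2 \<in> R x2" using uf_ne2[OF r Rer Rr[OF x2(1)]] by blast
    obtain U2 V2 T2 H2 where h2: "u2 = wd U2" "finite U2" "gmul x u2 = wd V2" "U2 = B x \<union> T2"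
      "V2 = A x \<union> T2" "V2 = (\<Union>n\<in>H2. D n)" using H1[OF u2(1)] by blast
    have gx: "\<forall>s\<in>B x. s < g" using f1(2) g(2) k by force
    have "g \<in> T2" using newT[OF u2(2) h2(1) h2(2) x2(2) h2(4) gx] .
    then obtain k' where k': "g \<in> D k'" using h2(5,6) by blast
    have kk: "k < k'"
    proof (rule ccontr)
      assume "\<not> k < k'"
      then consider "k' = k" | "k' < k" by linarith
      then show False
      proof cases
        case 1 then show False using g(2) k' by blast
      next
        case 2 then show False using blocks_lt[OF D(1) 2] k' k g(2) unfolding slt_def by force
      qed
    qed
    obtain e3 where e3: "e3 \<in> F" "\<forall>s\<in>D k'. s < e3" using unb_set[OF infF blocks_finite[OF D(1)]] by blast
    obtain x3 where x3: "x3 \<in> Q" "e3 \<in> B x3" using memF[OF e3(1)] by blast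
    obtain u3 where u3: "u3 \<in> Re" "u3 \<in> R x3" using uf_ne2[OF r Rer Rr[OF x3(1)]] by blast
    obtain U3 V3 T3 H3 where h3: "u3 = wd U3" "finite U3" "gmul x u3 = wd V3" "U3 = B x \<union> T3"
      "V3 = A x \<union> T3" "slt (A x) T3" "V3 = (\<Union>n\<in>H3. D n)" using H1[OF u3(1)] by blast
    obtain U3' V3' T3' where h3': "u3 = wd U3'" "finite U3'" "U3' = B x3 \<union> T3'" "slt (B x3) T3'"
      using RK[OF u3(2)] by blast
    have UU: "U3' = U3" using h3(1,2) h3'(1,2) wd_inj by metis
    have star: "f \<in> T3" if HH: "f \<in> F" "f1 \<le> f" "f \<le> e3" for f
    proof -
      obtain y where y: "y \<in> Q" "f \<in> B y" using memF[OF HH(1)] by blast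
      have "f \<in> B x3" using Pc[OF y(1) x3(1) y(2) x3(2) HH(3)] .
      then have "f \<in> U3" using h3'(3) UU by blast
      moreover have "f \<notin> B x" using f1(2) HH(2) by force
      ultimately show ?thesis using h3(4) by blast
    qed
    have f1k: "\<forall>s\<in>D k'. f1 < s" using blocks_lt[OF D(1) kk] k unfolding slt_def by blast
    have e3k: "\<forall>s\<in>D k'. s \<le> e3" using e3(2) by force
    have "f1 \<in> T3" using star[OF f1(1)] e3k k' f1k by force
    have "g \<in> T3" using star[OF g(1)] f1k k' e3k by force
    then obtain n where n: "n \<in> H3" "g \<in> D n" using h3(5,7) by blast
    have "n = k'" using blocks_unique[OF D(1) k' n(2)] .
    then have DV: "D k' \<subseteq> V3" using n(1) h3(7) by blast
    have DF: "D k' \<subseteq> F"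
    proof
      fix e assume e: "e \<in> D k'"
      then have "e \<in> A x \<union> T3" using DV h3(5) by blast
      moreover have "e \<notin> A x" using h3(6) \<open>f1 \<in> T3\<close> f1k e unfolding slt_def by force
      ultimately have "e \<in> T3" by blast
      then have "e \<in> U3'" using h3(4) UU by blast
      moreover have "e \<notin> T3'" using h3'(4) x3(2) e e3k unfolding slt_def by force
      ultimately have "e \<in> B x3" using h3'(3) by blast
      then show "e \<in> F" using BF[OF x3(1)] by blast
    qed
    have cv: "cvx F (D k')"
      unfolding cvx_def
    proof (intro ballI impI)
      fix f assume f: "f \<in> F" "(\<exists>a\<in>D k'. a \<le> f) \<and> (\<exists>b\<in>D k'. f \<le> b)"
      then obtain a b where ab: "a \<in> D k'" "a \<le> f" "b \<in> D k'" "f \<le> b" by blast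
      have "f1 \<le> f" using f1k ab by force
      moreover have "f \<le> e3" using e3k ab by force
      ultimately have "f \<in> T3" using star f(1) by blast
      then obtain n' where n': "n' \<in> H3" "f \<in> D n'" using h3(5,7) by blast
      have "n' = k'" using blocks_noninter[OF D(1) ab(1) ab(3) n'(2) ab(2) ab(4)] .
      then show "f \<in> D k'" using n' by simp
    qed
    have "wd (D k') \<in> Ce" using FU_intro[of "{k'}" D] D(2) by auto
    then obtain V where V: "finite V" "V \<inter> F \<noteq> {}" "\<not> (V \<subseteq> F \<and> cvx F V)" "wd (D k') = wd V"
      unfolding Ce_def by blast
    have "V = D k'" using V(1,4) wd_inj blocks_finite[OF D(1)] by metis
    then show False using V(3) DF cv by simp
  qed
qed


lemma W_in_p: assumes "is_ultrafilter p" "very_strongly_productive p" shows "W \<in> p"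
proof -
  obtain D where "blocks D" "FU D \<in> p" using vsp_FU[OF assms(2) uf_UNIV[OF assms(1)]] by blast
  then show ?thesis using FU_W[of D] uf_mono[OF assms(1), of "FU D" W] by blast
qed

lemma W_gone: assumes "finite A" shows "wd A \<in> W \<union> {gone}"
proof (cases "A = {}")
  case True then show ?thesis by simp
next
  case False then show ?thesis using assms by (auto simp: W_def)
qed

lemma mainL:
  assumes p: "is_ultrafilter p" and v: "very_strongly_productive p"
    and q: "is_ultrafilter q" and r: "is_ultrafilter r" and nq: "np q" and nr: "np r"
    and Wr: "W \<in> r" and m: "umult q r = p"
  shows "\<exists>b0. finite b0 \<and> r = umult (principal (wd b0)) p \<and> q = umult p (principal (ginv (wd b0)))"
proof -
  define Q where "Q = {x. {u. gmul x u \<in> W} \<in> r}"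
  have Wp: "W \<in> p" using W_in_p[OF p v] .
  have QQ: "Q \<in> q" using Wp m unfolding umult_def Q_def by blast
  have fin: "finite ((\<lambda>x. snd (dec x)) ` Q)" using chain_fin[OF p v q r Wr m Q_def] .
  define R where "R x = {u. gmul x u \<in> W} \<inter> W" for x
  have Rr: "R x \<in> r" if xQ: "x \<in> Q" for x
  proof -
    have "{u. gmul x u \<in> W} \<in> r" using xQ Q_def by blast
    then show ?thesis unfolding R_def using uf_int[OF r _ Wr] by blast
  qed
  have dQ: "canon (fst (dec x)) (snd (dec x)) \<and> x = gmul (wd (fst (dec x))) (ginv (wd (snd (dec x))))"
    if xQ: "x \<in> Q" for x
  proof -
    obtain u where "u \<in> R x" using uf_ne[OF r Rr[OF xQ]] by blast
    then show ?thesis using KQ_dec unfolding R_def by blast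
  qed
  have "Q \<subseteq> (\<Union>b\<in>(\<lambda>x. snd (dec x)) ` Q. {x\<in>Q. snd (dec x) = b})" by blast
  then have "(\<Union>b\<in>(\<lambda>x. snd (dec x)) ` Q. {x\<in>Q. snd (dec x) = b}) \<in> q" using uf_mono[OF q QQ] by blast
  then obtain b0 where Q0: "{x\<in>Q. snd (dec x) = b0} \<in> q" using uf_finite_union[OF q fin] by blast
  obtain x0 where x0: "x0 \<in> Q" "snd (dec x0) = b0" using uf_ne[OF q Q0] by blast
  have fb0: "finite b0" using dQ[OF x0(1)] x0(2) by (simp add: canon_def)
  define g where "g = wd b0"
  define q2 where "q2 = umult q (principal g)"
  define r2 where "r2 = umult (principal (ginv g)) r"
  have q2: "is_ultrafilter q2" unfolding q2_def using uf_pr[OF q] .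
  have r2: "is_ultrafilter r2" unfolding r2_def using uf_pl[OF r] .
  have nq2: "np q2" unfolding q2_def using np_pr[OF nq] .
  have nr2: "np r2" unfolding r2_def using np_pl[OF nr] .
  have m2: "umult q2 r2 = p" unfolding q2_def r2_def using SH[of g "ginv g" q r] m by simp
  have Wq2: "W \<in> q2"
  proof -
    have "{x\<in>Q. snd (dec x) = b0} \<subseteq> {x. gmul x g \<in> W \<union> {gone}}"
    proof
      fix x assume x: "x \<in> {x\<in>Q. snd (dec x) = b0}"
      then have d: "canon (fst (dec x)) b0" "x = gmul (wd (fst (dec x))) (ginv g)"
        using dQ[of x] unfolding g_def by auto
      have "gmul x g = gmul (gmul (wd (fst (dec x))) (ginv g)) g"
        using d(2) by (rule arg_cong[where f="\<lambda>y. gmul y g"])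
      also have "\<dots> = wd (fst (dec x))" by (simp add: gmul_assoc)
      finally have "gmul x g = wd (fst (dec x))" .
      moreover have "finite (fst (dec x))" using d(1) by (simp add: canon_def)
      ultimately show "x \<in> {x. gmul x g \<in> W \<union> {gone}}" using W_gone by simp
    qed
    then have "{x. gmul x g \<in> W \<union> {gone}} \<in> q" using uf_mono[OF q Q0] by blast
    then have "W \<union> {gone} \<in> q2" unfolding q2_def umult_pr by simp
    then have "(W \<union> {gone}) - {gone} \<in> q2" using np_diff[OF q2 nq2] by blast
    then show ?thesis using uf_mono[OF q2] by blast
  qed
  have Wr2: "W \<in> r2"
  proof -
    have "R x0 \<subseteq> {u. gmul (ginv g) u \<in> W \<union> {gone}}"
    proof
      fix u assume u: "u \<in> R x0"
      obtain U V T where h: "u = wd U" "finite U" "U = snd (dec x0) \<union> T" "slt (snd (dec x0)) T"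
        using KQ u unfolding R_def by blast
      have fT: "finite T" using h(2,3) by simp
      have "u = gmul g (wd T)" using h gmul_wd[OF fb0 fT] x0(2) unfolding g_def by simp
      then have "gmul (ginv g) u = wd T" by (simp add: gmul_assoc[symmetric])
      then show "u \<in> {u. gmul (ginv g) u \<in> W \<union> {gone}}" using W_gone[OF fT] by simp
    qed
    then have "{u. gmul (ginv g) u \<in> W \<union> {gone}} \<in> r" using uf_mono[OF r Rr[OF x0(1)]] by blast
    then have "W \<union> {gone} \<in> r2" unfolding r2_def umult_pl by simp
    then have "(W \<union> {gone}) - {gone} \<in> r2" using np_diff[OF r2 nr2] by blast
    then show ?thesis using uf_mono[OF r2] by blast
  qed
  have e: "q2 = p \<and> r2 = p" using SC[OF p v q2 r2 nq2 nr2 Wq2 Wr2 m2] .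
  have "r = umult (principal g) r2" unfolding r2_def by (simp add: pl_pl pl_one)
  moreover have "q = umult q2 (principal (ginv g))" unfolding q2_def by (simp add: pr_pr pr_one)
  ultimately show ?thesis using e fb0 unfolding g_def by blast
qed

lemma NPthm:
  assumes p: "is_ultrafilter p" and v: "very_strongly_productive p"
    and q: "is_ultrafilter q" and r: "is_ultrafilter r" and nq: "np q" and nr: "np r"
    and m: "umult q r = p"
  shows "\<exists>w. r = umult (principal w) p \<and> q = umult p (principal (ginv w))"
proof -
  have Wp: "W \<in> p" using W_in_p[OF p v] .
  have "{x. {u. gmul x u \<in> W} \<in> r} \<in> q" using Wp m unfolding umult_def by blast
  then obtain x0 where x0: "{u. gmul x0 u \<in> W} \<in> r" using uf_ne[OF q] by blast
  define r1 where "r1 = umult (principal x0) r"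
  define q1 where "q1 = umult q (principal (ginv x0))"
  have r1: "is_ultrafilter r1" unfolding r1_def using uf_pl[OF r] .
  have q1: "is_ultrafilter q1" unfolding q1_def using uf_pr[OF q] .
  have nr1: "np r1" unfolding r1_def using np_pl[OF nr] .
  have nq1: "np q1" unfolding q1_def using np_pr[OF nq] .
  have Wr1: "W \<in> r1" unfolding r1_def umult_pl using x0 by simp
  have m1: "umult q1 r1 = p" unfolding q1_def r1_def using SH[of "ginv x0" x0 q r] m by simp
  obtain b0 where b0: "r1 = umult (principal (wd b0)) p" "q1 = umult p (principal (ginv (wd b0)))"
    using mainL[OF p v q1 r1 nq1 nr1 Wr1 m1] by blast
  have "r = umult (principal (ginv x0)) r1" unfolding r1_def by (simp add: pl_pl pl_one)
  then have er: "r = umult (principal (gmul (ginv x0) (wd b0))) p" using b0(1) by (simp add: pl_pl)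
  have "q = umult q1 (principal x0)" unfolding q1_def by (simp add: pr_pr pr_one)
  then have eq: "q = umult p (principal (gmul (ginv (wd b0)) x0))" using b0(2) by (simp add: pr_pr)
  have "ginv (gmul (ginv x0) (wd b0)) = gmul (ginv (wd b0)) x0" by (simp add: ginv_gmul)
  then show ?thesis using er eq by metis
qed

theorem mainTheorem18:
  fixes p :: "fg set set"
  assumes "is_ultrafilter p" and "freeS \<in> p" and "very_strongly_productive p"
  shows "(\<forall>q r. is_ultrafilter q \<and> is_ultrafilter r \<and> umult q r = p \<longrightarrow>
            (\<exists>w. (r = umult (principal w) p \<and> q = umult p (principal (ginv w)))
               \<or> (r = principal w \<and> q = umult p (principal (ginv w)))
               \<or> (r = umult (principal w) p \<and> q = principal (ginv w))))
       \<and> (\<forall>q r. is_ultrafilter q \<and> is_ultrafilter r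
            \<and> q \<notin> range principal \<and> r \<notin> range principal \<and> umult q r = p \<longrightarrow>
            (\<exists>w. r = umult (principal w) p \<and> q = umult p (principal (ginv w))))"
proof (intro conjI allI impI)
  fix q r assume h: "is_ultrafilter q \<and> is_ultrafilter r
            \<and> q \<notin> range principal \<and> r \<notin> range principal \<and> umult q r = p"
  then show "\<exists>w. r = umult (principal w) p \<and> q = umult p (principal (ginv w))"
    using NPthm[OF assms(1) assms(3)] np_iff by blast
next
  fix q r assume h: "is_ultrafilter q \<and> is_ultrafilter r \<and> umult q r = p"
  then have q: "is_ultrafilter q" and r: "is_ultrafilter r" and m: "umult q r = p" by auto
  show "\<exists>w. (r = umult (principal w) p \<and> q = umult p (principal (ginv w)))
               \<or> (r = principal w \<and> q = umult p (principal (ginv w)))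
               \<or> (r = umult (principal w) p \<and> q = principal (ginv w))"
  proof (cases "r \<in> range principal")
    case True
    then obtain w where w: "r = principal w" by blast
    have "umult p (principal (ginv w)) = umult (umult q (principal w)) (principal (ginv w))"
      using m w by simp
    also have "\<dots> = q" by (simp add: pr_pr pr_one)
    finally show ?thesis using w by metis
  next
    case nr: False
    show ?thesis
    proof (cases "q \<in> range principal")
      case True
      then obtain x where x: "q = principal x" by blast
      have "umult (principal (ginv x)) p = umult (principal (ginv x)) (umult (principal x) r)"
        using m x by simp
      also have "\<dots> = r" by (simp add: pl_pl pl_one)
      finally have "r = umult (principal (ginv x)) p \<and> q = principal (ginv (ginv x))" using x by simp
      then show ?thesis by blast
    next
      case False
      then show ?thesis using NPthm[OF assms(1) assms(3) q r] np_iff q r nr m by blast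
    qed
  qed
qed

end
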